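(* Let $N=(V,E)$ be a rooted DAG, let $E_T$ and $E_N$ be its sets of tree arcs and network arcs, respectively, and let $N^*=(V,E^* )$ be the directed graph with $E^*=E\cup E_N^{-1}$, where $E_N^{-1}=\{(v,u)\mid (u,v)\in E_N\}$. The following are equivalent: (i) $N$ is strongly time consistent; (ii) $N^*$ has no cycle containing some tree arc of $N$; (iii) $N$ admits a temporal representation.
   Context: In a DAG, a tree node is a node of in-degree at most 1 and a hybrid node one of in-degree greater than 1; the root is the (unique) node of in-degree 0. A tree arc is an arc whose head is a tree node; a network arc is an arc whose head is a hybrid node. A path in a directed graph is a sequence of nodes $(v_0,\dots,v_k)$ with each $(v_{i-1},v_i)$ an arc; it is a cycle if $v_k=v_0$ (and $k\ge1$). $N$ is strongly time consistent if for any two nodes $x,y$ for which there exists a sequence of nodes $(v_0,\dots,v_k)$ with $v_0=x$, $v_k=y$, such that for every $i=0,\dots,k-1$ either $(v_i,v_{i+1})\in E$ or $(v_{i+1},v_i)$ is a network arc of $N$, and at least one pair $(v_i,v_{i+1})$ is a tree arc of $N$, the nodes $x$ and $y$ do not have a hybrid child in common. A temporal representation of $N$ is a map $\tau:V\to\mathbb{N}$ such that $\tau(r)=0$ for the root $r$, $\tau(u)<\tau(v)$ for every $(u,v)\in E_T$, and $\tau(u)=\tau(v)$ for every $(u,v)\in E_N$. *)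

theory Defs
  imports Main
begin

definition indeg :: "('a \<times> 'a) set \<Rightarrow> 'a \<Rightarrow> nat" where
  "indeg E v = card {u. (u, v) \<in> E}"

definition tree_node :: "('a \<times> 'a) set \<Rightarrow> 'a \<Rightarrow> bool" where
  "tree_node E v \<longleftrightarrow> indeg E v \<le> 1"

definition hybrid_node :: "('a \<times> 'a) set \<Rightarrow> 'a \<Rightarrow> bool" where
  "hybrid_node E v \<longleftrightarrow> indeg E v > 1"

definition tree_arcs :: "('a \<times> 'a) set \<Rightarrow> ('a \<times> 'a) set" where
  "tree_arcs E = {(u, v). (u, v) \<in> E \<and> tree_node E v}"

definition network_arcs :: "('a \<times> 'a) set \<Rightarrow> ('a \<times> 'a) set" where
  "network_arcs E = {(u, v). (u, v) \<in> E \<and> hybrid_node E v}"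

definition rooted_dag :: "'a set \<Rightarrow> ('a \<times> 'a) set \<Rightarrow> 'a \<Rightarrow> bool" where
  "rooted_dag V E r \<longleftrightarrow> finite V \<and> E \<subseteq> V \<times> V \<and> acyclic E \<and>
     r \<in> V \<and> indeg E r = 0 \<and> (\<forall>v \<in> V. indeg E v = 0 \<longrightarrow> v = r)"

definition Estar :: "('a \<times> 'a) set \<Rightarrow> ('a \<times> 'a) set" where
  "Estar E = E \<union> (network_arcs E)\<inverse>"

definition is_path :: "('a \<times> 'a) set \<Rightarrow> 'a list \<Rightarrow> bool" where
  "is_path A vs \<longleftrightarrow> vs \<noteq> [] \<and> (\<forall>i. Suc i < length vs \<longrightarrow> (vs ! i, vs ! Suc i) \<in> A)"

definition is_cycle :: "('a \<times> 'a) set \<Rightarrow> 'a list \<Rightarrow> bool" where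
  "is_cycle A vs \<longleftrightarrow> is_path A vs \<and> length vs \<ge> 2 \<and> last vs = hd vs"

definition contains_arc_of :: "('a \<times> 'a) set \<Rightarrow> 'a list \<Rightarrow> bool" where
  "contains_arc_of B vs \<longleftrightarrow> (\<exists>i. Suc i < length vs \<and> (vs ! i, vs ! Suc i) \<in> B)"

definition strongly_time_consistent :: "('a \<times> 'a) set \<Rightarrow> bool" where
  "strongly_time_consistent E \<longleftrightarrow>
     (\<forall>x y vs. is_path (Estar E) vs \<and> hd vs = x \<and> last vs = y \<and> contains_arc_of (tree_arcs E) vs
        \<longrightarrow> \<not> (\<exists>h. hybrid_node E h \<and> (x, h) \<in> E \<and> (y, h) \<in> E))"

definition temporal_representation :: "('a \<times> 'a) set \<Rightarrow> 'a \<Rightarrow> ('a \<Rightarrow> nat) \<Rightarrow> bool" where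
  "temporal_representation E r \<tau> \<longleftrightarrow> \<tau> r = 0 \<and>
     (\<forall>(u, v) \<in> tree_arcs E. \<tau> u < \<tau> v) \<and>
     (\<forall>(u, v) \<in> network_arcs E. \<tau> u = \<tau> v)"

end

theory Submission
  imports Defs
begin

lemma is_path_single[simp]: "is_path A [x]"
  by (simp add: is_path_def)

lemma is_path_Cons2[simp]: "is_path A (x#y#vs) \<longleftrightarrow> (x,y) \<in> A \<and> is_path A (y#vs)"
proof
  assume h: "is_path A (x#y#vs)"
  have h': "\<And>i. Suc i < length (x#y#vs) \<Longrightarrow> ((x#y#vs) ! i, (x#y#vs) ! Suc i) \<in> A"
    using h unfolding is_path_def by blast
  have "(x,y) \<in> A" using h'[of 0] by simp
  moreover have "is_path A (y#vs)" unfolding is_path_def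
  proof (intro conjI allI impI)
    fix i assume "Suc i < length (y#vs)"
    then show "((y#vs) ! i, (y#vs) ! Suc i) \<in> A" using h'[of "Suc i"] by simp
  qed simp
  ultimately show "(x,y) \<in> A \<and> is_path A (y#vs)" by simp
next
  assume h: "(x,y) \<in> A \<and> is_path A (y#vs)"
  show "is_path A (x#y#vs)" unfolding is_path_def
  proof (intro conjI allI impI)
    fix i assume i: "Suc i < length (x#y#vs)"
    show "((x#y#vs) ! i, (x#y#vs) ! Suc i) \<in> A"
    proof (cases i)
      case 0 then show ?thesis using h by simp
    next
      case (Suc j) then show ?thesis using h i unfolding is_path_def by simp
    qed
  qed simp
qed

lemma contains_single[simp]: "\<not> contains_arc_of B [x]"
  by (simp add: contains_arc_of_def)

lemma contains_Cons2[simp]: "contains_arc_of B (x#y#vs) \<longleftrightarrow> (x,y) \<in> B \<or> contains_arc_of B (y#vs)"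
  unfolding contains_arc_of_def
proof
  assume "\<exists>i. Suc i < length (x # y # vs) \<and> ((x # y # vs) ! i, (x # y # vs) ! Suc i) \<in> B"
  then obtain i where i: "Suc i < length (x # y # vs)" "((x # y # vs) ! i, (x # y # vs) ! Suc i) \<in> B" by blast
  show "(x, y) \<in> B \<or> (\<exists>i. Suc i < length (y # vs) \<and> ((y # vs) ! i, (y # vs) ! Suc i) \<in> B)"
  proof (cases i)
    case 0 then show ?thesis using i by simp
  next
    case (Suc j) then show ?thesis using i by auto
  qed
next
  assume h: "(x, y) \<in> B \<or> (\<exists>i. Suc i < length (y # vs) \<and> ((y # vs) ! i, (y # vs) ! Suc i) \<in> B)"
  show "\<exists>i. Suc i < length (x # y # vs) \<and> ((x # y # vs) ! i, (x # y # vs) ! Suc i) \<in> B"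
  proof (cases "(x,y) \<in> B")
    case True then show ?thesis by (intro exI[of _ 0]) simp
  next
    case False
    then obtain i where "Suc i < length (y # vs)" "((y # vs) ! i, (y # vs) ! Suc i) \<in> B" using h by blast
    then show ?thesis by (intro exI[of _ "Suc i"]) simp
  qed
qed

lemma path_rt: "is_path A (x#vs) \<Longrightarrow> (x, last (x#vs)) \<in> A\<^sup>*"
proof (induction vs arbitrary: x)
  case Nil then show ?case by simp
next
  case (Cons y vs)
  then have "(x,y) \<in> A" "(y, last (y#vs)) \<in> A\<^sup>*" by auto
  then show ?case by simp
qed

lemma path_rt_contains: "is_path A (x#vs) \<Longrightarrow> contains_arc_of B (x#vs) \<Longrightarrow> B \<subseteq> A \<Longrightarrow>
   (x, last (x#vs)) \<in> A\<^sup>* O B O A\<^sup>*"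
proof (induction vs arbitrary: x)
  case Nil then show ?case by simp
next
  case (Cons y vs)
  have xy: "(x,y) \<in> A" and p: "is_path A (y#vs)" using Cons.prems by auto
  show ?case
  proof (cases "(x,y) \<in> B")
    case True
    have "(y, last (y#vs)) \<in> A\<^sup>*" using path_rt[OF p] .
    then have "(x, last (y#vs)) \<in> A\<^sup>* O B O A\<^sup>*" using True by (meson relcompI rtrancl.rtrancl_refl)
    then show ?thesis by simp
  next
    case False
    then have "contains_arc_of B (y#vs)" using Cons.prems by simp
    then have "(y, last (y#vs)) \<in> A\<^sup>* O B O A\<^sup>*" using Cons.IH p Cons.prems(3) by blast
    then obtain a b where "(y,a) \<in> A\<^sup>*" "(a,b) \<in> B" "(b, last (y#vs)) \<in> A\<^sup>*" by blast
    moreover have "(x,a) \<in> A\<^sup>*" using xy \<open>(y,a) \<in> A\<^sup>*\<close> by (meson converse_rtrancl_into_rtrancl)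
    ultimately have "(x, last (y#vs)) \<in> A\<^sup>* O B O A\<^sup>*" by (meson relcompI)
    then show ?thesis by simp
  qed
qed

lemma rt_path: "(x,y) \<in> A\<^sup>* \<Longrightarrow> \<exists>vs. is_path A (x#vs) \<and> last (x#vs) = y"
proof (induction rule: converse_rtrancl_induct)
  case base then show ?case by (intro exI[of _ "[]"]) simp
next
  case (step x z)
  then obtain vs where "is_path A (z#vs)" "last (z#vs) = y" by blast
  then show ?case using step by (intro exI[of _ "z#vs"]) simp
qed

lemma rt_path_contains:
  assumes "(x,a) \<in> A\<^sup>*" "(a,b) \<in> B" "(b,y) \<in> A\<^sup>*" "B \<subseteq> A"
  shows "\<exists>vs. is_path A (x#vs) \<and> last (x#vs) = y \<and> contains_arc_of B (x#vs)"
  using assms(1)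
proof (induction rule: converse_rtrancl_induct)
  case base
  obtain vs where "is_path A (b#vs)" "last (b#vs) = y" using rt_path[OF assms(3)] by blast
  then show ?case using assms by (intro exI[of _ "b#vs"]) auto
next
  case (step x z)
  then obtain vs where "is_path A (z#vs)" "last (z#vs) = y" "contains_arc_of B (z#vs)" by blast
  then show ?case using step by (intro exI[of _ "z#vs"]) simp
qed

lemma cycle_iff:
  assumes "B \<subseteq> A"
  shows "(\<exists>vs. is_cycle A vs \<and> contains_arc_of B vs) \<longleftrightarrow> (\<exists>a b. (a,b) \<in> B \<and> (b,a) \<in> A\<^sup>*)"
proof
  assume "\<exists>vs. is_cycle A vs \<and> contains_arc_of B vs"
  then obtain vs where c: "is_cycle A vs" "contains_arc_of B vs" by blast
  have p: "is_path A vs" and l: "last vs = hd vs" using c(1) unfolding is_cycle_def by auto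
  have "vs \<noteq> []" using p unfolding is_path_def by simp
  then obtain x ws where vs: "vs = x#ws" by (cases vs) simp_all
  have "(x, last (x#ws)) \<in> A\<^sup>* O B O A\<^sup>*"
    using path_rt_contains[of A x ws B] p c(2) assms unfolding vs by simp
  moreover have "last (x#ws) = x" using l vs by simp
  ultimately have "(x,x) \<in> A\<^sup>* O B O A\<^sup>*" by simp
  then obtain a b where "(x,a) \<in> A\<^sup>*" "(a,b) \<in> B" "(b,x) \<in> A\<^sup>*" by blast
  then show "\<exists>a b. (a,b) \<in> B \<and> (b,a) \<in> A\<^sup>*" by (meson rtrancl_trans)
next
  assume "\<exists>a b. (a,b) \<in> B \<and> (b,a) \<in> A\<^sup>*"
  then obtain a b where ab: "(a,b) \<in> B" "(b,a) \<in> A\<^sup>*" by blast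
  obtain ws where w: "is_path A (b#ws)" "last (b#ws) = a" using rt_path[OF ab(2)] by blast
  have "(a,b) \<in> A" using ab assms by blast
  then have "is_path A (a#b#ws)" using w by simp
  moreover have "last (a#b#ws) = hd (a#b#ws)" using w by simp
  ultimately have "is_cycle A (a#b#ws)" unfolding is_cycle_def by simp
  moreover have "contains_arc_of B (a#b#ws)" using ab by simp
  ultimately show "\<exists>vs. is_cycle A vs \<and> contains_arc_of B vs" by blast
qed

lemma stc_iff:
  assumes "tree_arcs E \<subseteq> Estar E"
  shows "strongly_time_consistent E \<longleftrightarrow>
    \<not> (\<exists>x y h. (x,y) \<in> (Estar E)\<^sup>* O tree_arcs E O (Estar E)\<^sup>* \<and> hybrid_node E h \<and> (x,h) \<in> E \<and> (y,h) \<in> E)"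
proof
  assume s: "strongly_time_consistent E"
  show "\<not> (\<exists>x y h. (x,y) \<in> (Estar E)\<^sup>* O tree_arcs E O (Estar E)\<^sup>* \<and> hybrid_node E h \<and> (x,h) \<in> E \<and> (y,h) \<in> E)"
  proof
    assume "\<exists>x y h. (x,y) \<in> (Estar E)\<^sup>* O tree_arcs E O (Estar E)\<^sup>* \<and> hybrid_node E h \<and> (x,h) \<in> E \<and> (y,h) \<in> E"
    then obtain x y h a b where h: "(x,a) \<in> (Estar E)\<^sup>*" "(a,b) \<in> tree_arcs E" "(b,y) \<in> (Estar E)\<^sup>*"
       "hybrid_node E h" "(x,h) \<in> E" "(y,h) \<in> E" by blast
    obtain vs where "is_path (Estar E) (x#vs)" "last (x#vs) = y" "contains_arc_of (tree_arcs E) (x#vs)"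
      using rt_path_contains[OF h(1-3) assms] by blast
    then show False using s h unfolding strongly_time_consistent_def by (metis list.sel(1))
  qed
next
  assume n: "\<not> (\<exists>x y h. (x,y) \<in> (Estar E)\<^sup>* O tree_arcs E O (Estar E)\<^sup>* \<and> hybrid_node E h \<and> (x,h) \<in> E \<and> (y,h) \<in> E)"
  show "strongly_time_consistent E" unfolding strongly_time_consistent_def
  proof (intro allI impI)
    fix x y vs
    assume a: "is_path (Estar E) vs \<and> hd vs = x \<and> last vs = y \<and> contains_arc_of (tree_arcs E) vs"
    then obtain ws where vs: "vs = x#ws" unfolding is_path_def by (cases vs) auto
    have "(x,y) \<in> (Estar E)\<^sup>* O tree_arcs E O (Estar E)\<^sup>*"
      using path_rt_contains[of "Estar E" x ws "tree_arcs E"] a vs assms by simp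
    then show "\<not> (\<exists>h. hybrid_node E h \<and> (x, h) \<in> E \<and> (y, h) \<in> E)" using n by blast
  qed
qed

theorem proposition1:
  assumes "rooted_dag V E r"
  shows "(strongly_time_consistent E
            \<longleftrightarrow> \<not> (\<exists>vs. is_cycle (Estar E) vs \<and> contains_arc_of (tree_arcs E) vs))
       \<and> (\<not> (\<exists>vs. is_cycle (Estar E) vs \<and> contains_arc_of (tree_arcs E) vs)
            \<longleftrightarrow> (\<exists>\<tau>. temporal_representation E r \<tau>))"
proof -
  let ?R = "Estar E" and ?T = "tree_arcs E" and ?N = "network_arcs E"
  have fin: "finite V" and EV: "E \<subseteq> V \<times> V" and acyc: "acyclic E" and rV: "r \<in> V"
    and r0: "indeg E r = 0" and uniq: "\<forall>v\<in>V. indeg E v = 0 \<longrightarrow> v = r"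
    using assms unfolding rooted_dag_def by auto
  have TE: "?T \<subseteq> E" and NE: "?N \<subseteq> E" unfolding tree_arcs_def network_arcs_def by auto
  have ER: "E \<subseteq> ?R" unfolding Estar_def by auto
  have TR: "?T \<subseteq> ?R" using TE ER by auto
  have ETN: "E \<subseteq> ?T \<union> ?N" unfolding tree_arcs_def network_arcs_def tree_node_def hybrid_node_def by auto
  have NR: "(u,v) \<in> ?N \<Longrightarrow> (v,u) \<in> ?R" for u v unfolding Estar_def by auto
  have Rcases: "(u,v) \<in> ?R \<Longrightarrow> (u,v) \<in> ?T \<or> (u,v) \<in> ?N \<or> (v,u) \<in> ?N" for u v
    using ETN unfolding Estar_def by auto
  have cyc: "(\<exists>vs. is_cycle ?R vs \<and> contains_arc_of ?T vs) \<longleftrightarrow> (\<exists>a b. (a,b) \<in> ?T \<and> (b,a) \<in> ?R\<^sup>*)"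
    using cycle_iff[OF TR] .
  have ext: "(b,a) \<in> ?R\<^sup>* \<Longrightarrow> (b,a) \<in> E\<^sup>* \<or> (\<exists>v u. (b,v) \<in> ?R\<^sup>* \<and> (u,v) \<in> ?N \<and> (u,a) \<in> ?R\<^sup>*)" for a b
  proof (induction rule: rtrancl_induct)
    case base then show ?case by simp
  next
    case (step c a)
    show ?case
    proof (cases "(c,a) \<in> E")
      case True
      from step.IH show ?thesis
      proof
        assume "(b,c) \<in> E\<^sup>*" then show ?thesis using True by auto
      next
        assume "\<exists>v u. (b,v) \<in> ?R\<^sup>* \<and> (u,v) \<in> ?N \<and> (u,c) \<in> ?R\<^sup>*"
        then obtain v u where "(b,v) \<in> ?R\<^sup>*" "(u,v) \<in> ?N" "(u,c) \<in> ?R\<^sup>*" by blast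
        moreover have "(u,a) \<in> ?R\<^sup>*" using \<open>(u,c) \<in> ?R\<^sup>*\<close> True ER by (meson rtrancl.rtrancl_into_rtrancl subsetD)
        ultimately show ?thesis by blast
      qed
    next
      case False
      then have "(a,c) \<in> ?N" using step.hyps(2) unfolding Estar_def by auto
      then show ?thesis using step.hyps(1) by blast
    qed
  qed
  have part1: "strongly_time_consistent E \<longleftrightarrow> \<not> (\<exists>a b. (a,b) \<in> ?T \<and> (b,a) \<in> ?R\<^sup>*)"
  proof -
    have "(\<exists>x y h. (x,y) \<in> ?R\<^sup>* O ?T O ?R\<^sup>* \<and> hybrid_node E h \<and> (x,h) \<in> E \<and> (y,h) \<in> E)
          \<longleftrightarrow> (\<exists>a b. (a,b) \<in> ?T \<and> (b,a) \<in> ?R\<^sup>*)"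
    proof
      assume "\<exists>x y h. (x,y) \<in> ?R\<^sup>* O ?T O ?R\<^sup>* \<and> hybrid_node E h \<and> (x,h) \<in> E \<and> (y,h) \<in> E"
      then obtain x y h a b where h: "(x,a) \<in> ?R\<^sup>*" "(a,b) \<in> ?T" "(b,y) \<in> ?R\<^sup>*"
        "hybrid_node E h" "(x,h) \<in> E" "(y,h) \<in> E" by blast
      have "(x,h) \<in> ?N" using h unfolding network_arcs_def by auto
      then have hx: "(h,x) \<in> ?R" by (rule NR)
      have "(b,h) \<in> ?R\<^sup>*" using h(3) h(6) ER by (meson rtrancl.rtrancl_into_rtrancl subsetD)
      then have "(b,x) \<in> ?R\<^sup>*" using hx by (meson rtrancl.rtrancl_into_rtrancl)
      then have "(b,a) \<in> ?R\<^sup>*" using h(1) by (meson rtrancl_trans)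
      then show "\<exists>a b. (a,b) \<in> ?T \<and> (b,a) \<in> ?R\<^sup>*" using h(2) by blast
    next
      assume "\<exists>a b. (a,b) \<in> ?T \<and> (b,a) \<in> ?R\<^sup>*"
      then obtain a b where ab: "(a,b) \<in> ?T" "(b,a) \<in> ?R\<^sup>*" by blast
      from ext[OF ab(2)] show "\<exists>x y h. (x,y) \<in> ?R\<^sup>* O ?T O ?R\<^sup>* \<and> hybrid_node E h \<and> (x,h) \<in> E \<and> (y,h) \<in> E"
      proof
        assume "(b,a) \<in> E\<^sup>*"
        moreover have "(a,b) \<in> E" using ab TE by auto
        ultimately have "(a,a) \<in> E\<^sup>+" by auto
        then show ?thesis using acyc unfolding acyclic_def by blast
      next
        assume "\<exists>v u. (b,v) \<in> ?R\<^sup>* \<and> (u,v) \<in> ?N \<and> (u,a) \<in> ?R\<^sup>*"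
        then obtain v u where vu: "(b,v) \<in> ?R\<^sup>*" "(u,v) \<in> ?N" "(u,a) \<in> ?R\<^sup>*" by blast
        have "(b,u) \<in> ?R\<^sup>*" using vu(1) NR[OF vu(2)] by (meson rtrancl.rtrancl_into_rtrancl)
        then have "(u,u) \<in> ?R\<^sup>* O ?T O ?R\<^sup>*" using vu(3) ab(1) by blast
        moreover have "hybrid_node E v" "(u,v) \<in> E" using vu(2) unfolding network_arcs_def by auto
        ultimately show ?thesis by blast
      qed
    qed
    then show ?thesis using stc_iff[OF TR] by simp
  qed
  have finE: "finite E" using EV fin by (meson finite_SigmaI finite_subset)
  have wfE: "wf E" using finite_acyclic_wf[OF finE acyc] .
  have reach: "v \<in> V \<Longrightarrow> (r,v) \<in> E\<^sup>*" for v
  proof (induction v rule: wf_induct_rule[OF wfE])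
    case (1 v)
    show ?case
    proof (cases "indeg E v = 0")
      case True then show ?thesis using uniq 1 by auto
    next
      case False
      then have "{u. (u,v) \<in> E} \<noteq> {}" unfolding indeg_def by (metis card.empty)
      then obtain u where u: "(u,v) \<in> E" by blast
      then have "u \<in> V" using EV by auto
      then have "(r,u) \<in> E\<^sup>*" using 1 u by blast
      then show ?thesis using u by auto
    qed
  qed
  have part2: "\<not> (\<exists>a b. (a,b) \<in> ?T \<and> (b,a) \<in> ?R\<^sup>*) \<longleftrightarrow> (\<exists>\<tau>. temporal_representation E r \<tau>)"
  proof
    assume nc: "\<not> (\<exists>a b. (a,b) \<in> ?T \<and> (b,a) \<in> ?R\<^sup>*)"
    define S where "S = ?R\<^sup>* O ?T O ?R\<^sup>*"
    have irr: "(x,x) \<notin> S" for x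
    proof
      assume "(x,x) \<in> S"
      then obtain a b where "(x,a) \<in> ?R\<^sup>*" "(a,b) \<in> ?T" "(b,x) \<in> ?R\<^sup>*" unfolding S_def by blast
      then show False using nc by (meson rtrancl_trans)
    qed
    have SR: "(x,y) \<in> S \<Longrightarrow> (y,z) \<in> ?R \<Longrightarrow> (x,z) \<in> S" for x y z
      unfolding S_def by (auto intro: rtrancl.rtrancl_into_rtrancl)
    have RS: "(x,y) \<in> ?R\<^sup>* \<Longrightarrow> (y,z) \<in> S \<Longrightarrow> (x,z) \<in> S" for x y z
      unfolding S_def by (auto intro: rtrancl_trans)
    define \<tau> where "\<tau> v = card {u \<in> V. (u,v) \<in> S}" for v
    have "temporal_representation E r \<tau>"
      unfolding temporal_representation_def
    proof (intro conjI)
      have "{u \<in> V. (u,r) \<in> S} = {}"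
      proof (rule ccontr)
        assume "{u \<in> V. (u,r) \<in> S} \<noteq> {}"
        then obtain u where "u \<in> V" "(u,r) \<in> S" by blast
        then have "(r,u) \<in> ?R\<^sup>*" using reach ER by (meson rtrancl_mono subsetD)
        then have "(r,r) \<in> S" using RS \<open>(u,r) \<in> S\<close> by blast
        then show False using irr by blast
      qed
      then show "\<tau> r = 0" unfolding \<tau>_def by (metis card.empty)
    next
      show "\<forall>(u, v)\<in>?T. \<tau> u < \<tau> v"
      proof (intro ballI, clarify)
        fix u v assume uv: "(u,v) \<in> ?T"
        have "u \<in> V" using uv TE EV by auto
        have "(u,v) \<in> S" using uv unfolding S_def by blast
        have "{w \<in> V. (w,u) \<in> S} \<subset> {w \<in> V. (w,v) \<in> S}"
          using SR[of _ u v] uv TR irr \<open>u \<in> V\<close> \<open>(u,v) \<in> S\<close> by blast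
        then show "\<tau> u < \<tau> v" unfolding \<tau>_def using fin by (simp add: psubset_card_mono)
      qed
    next
      show "\<forall>(u, v)\<in>?N. \<tau> u = \<tau> v"
      proof (intro ballI, clarify)
        fix u v assume uv: "(u,v) \<in> ?N"
        have "(u,v) \<in> ?R" using uv NE ER by auto
        moreover have "(v,u) \<in> ?R" using NR[OF uv] .
        ultimately have "{w \<in> V. (w,u) \<in> S} = {w \<in> V. (w,v) \<in> S}" using SR by blast
        then show "\<tau> u = \<tau> v" unfolding \<tau>_def by simp
      qed
    qed
    then show "\<exists>\<tau>. temporal_representation E r \<tau>" by blast
  next
    assume "\<exists>\<tau>. temporal_representation E r \<tau>"
    then obtain \<tau> where t: "temporal_representation E r \<tau>" by blast
    have tT: "(u,v) \<in> ?T \<Longrightarrow> \<tau> u < \<tau> v" for u v using t unfolding temporal_representation_def by auto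
    have tN: "(u,v) \<in> ?N \<Longrightarrow> \<tau> u = \<tau> v" for u v using t unfolding temporal_representation_def by auto
    have mono: "(x,y) \<in> ?R\<^sup>* \<Longrightarrow> \<tau> x \<le> \<tau> y" for x y
    proof (induction rule: rtrancl_induct)
      case base then show ?case by simp
    next
      case (step c d)
      from Rcases[OF step.hyps(2)] have "\<tau> c \<le> \<tau> d" using tT tN by (metis less_imp_le order_refl)
      then show ?case using step.IH by simp
    qed
    show "\<not> (\<exists>a b. (a,b) \<in> ?T \<and> (b,a) \<in> ?R\<^sup>*)"
      using mono tT by (meson leD)
  qed
  show ?thesis using part1 part2 cyc by simp
qed

end
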